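(* Let $\mathcal A,\mathcal B\subset 2^{[n]}$ be cross-IU families (for all $A\in\mathcal A$, $B\in\mathcal B$: $A\cap B\neq\emptyset$ and $A\cup B\neq[n]$) with $|\mathcal A|\ge|\mathcal B|$. Then $$|\mathcal A|+3|\mathcal B|\le 2^n.$$
   Context: $[n]=\{1,\dots,n\}$ and $2^{[n]}$ is its power set. *)

theory Defs
  imports Main
begin

definition cross_IU :: "nat \<Rightarrow> nat set set \<Rightarrow> nat set set \<Rightarrow> bool" where
  "cross_IU n \<A> \<B> \<longleftrightarrow>
     (\<forall>A\<in>\<A>. \<forall>B\<in>\<B>. A \<inter> B \<noteq> {} \<and> A \<union> B \<noteq> {1..n})"

end

theory Submission
  imports Defs Complex_Main
begin

definition upc :: "'a set \<Rightarrow> 'a set set \<Rightarrow> bool" where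
  "upc S U \<longleftrightarrow> U \<subseteq> Pow S \<and> (\<forall>X Y. X \<in> U \<longrightarrow> X \<subseteq> Y \<longrightarrow> Y \<subseteq> S \<longrightarrow> Y \<in> U)"

definition dnc :: "'a set \<Rightarrow> 'a set set \<Rightarrow> bool" where
  "dnc S D \<longleftrightarrow> D \<subseteq> Pow S \<and> (\<forall>X Y. X \<in> D \<longrightarrow> Y \<subseteq> X \<longrightarrow> Y \<in> D)"

lemma split_card:
  assumes "finite S" "x \<notin> S" "F \<subseteq> Pow (insert x S)"
  shows "card F = card {Y\<in>Pow S. Y \<in> F} + card {Y\<in>Pow S. insert x Y \<in> F}"
proof -
  have eq: "F = {Y\<in>Pow S. Y \<in> F} \<union> insert x ` {Y\<in>Pow S. insert x Y \<in> F}"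
  proof (rule set_eqI, rule iffI)
    fix X assume X: "X \<in> F"
    show "X \<in> {Y\<in>Pow S. Y \<in> F} \<union> insert x ` {Y\<in>Pow S. insert x Y \<in> F}"
    proof (cases "x \<in> X")
      case True
      then have "X = insert x (X - {x})" by auto
      moreover have "X - {x} \<in> Pow S" using X assms(3) by auto
      ultimately show ?thesis using X by (metis (mono_tags, lifting) UnI2 image_eqI mem_Collect_eq)
    next
      case False
      then show ?thesis using X assms(3) by auto
    qed
  qed auto
  have fin: "finite (Pow (insert x S))" using assms(1) by simp
  have inj: "inj_on (insert x) {Y\<in>Pow S. insert x Y \<in> F}"
    using assms(2) by (auto simp: inj_on_def)
  have disj: "{Y\<in>Pow S. Y \<in> F} \<inter> insert x ` {Y\<in>Pow S. insert x Y \<in> F} = {}"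
    using assms(2) by auto
  have "card F = card {Y\<in>Pow S. Y \<in> F} + card (insert x ` {Y\<in>Pow S. insert x Y \<in> F})"
    apply (subst eq)
    apply (rule card_Un_disjoint)
    using assms(1) disj by auto
  also have "\<dots> = card {Y\<in>Pow S. Y \<in> F} + card {Y\<in>Pow S. insert x Y \<in> F}"
    using card_image[OF inj] by simp
  finally show ?thesis .
qed

lemma arith_step:
  fixes i0 i1 u0 u1 d0 d1 M :: nat
  assumes "i0 * M \<le> u0 * d0" "i1 * M \<le> u1 * d1" "u0 \<le> u1" "d1 \<le> d0"
  shows "(i0 + i1) * (2 * M) \<le> (u0 + u1) * (d0 + d1)"
proof -
  obtain p where p: "u1 = u0 + p" using assms(3) le_Suc_ex by blast
  obtain q where q: "d0 = d1 + q" using assms(4) le_Suc_ex by blast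
  have "(i0 + i1) * (2 * M) \<le> 2 * (u0 * d0 + u1 * d1)" using assms(1,2) by (simp add: algebra_simps)
  also have "\<dots> \<le> (u0 + u1) * (d0 + d1)" unfolding p q by (simp add: algebra_simps)
  finally show ?thesis .
qed

lemma harris:
  assumes "finite S"
  shows "\<forall>U D. upc S U \<longrightarrow> dnc S D \<longrightarrow> card (U \<inter> D) * 2 ^ card S \<le> card U * card D"
  using assms
proof (induction S rule: finite_induct)
  case empty
  show ?case
  proof (intro allI impI)
    fix U D :: "'a set set" assume "upc {} U" "dnc {} D"
    then have "U \<subseteq> {{}}" "D \<subseteq> {{}}" by (auto simp: upc_def dnc_def)
    then show "card (U \<inter> D) * 2 ^ card {} \<le> card U * card D"
    proof (cases "U \<inter> D = {}")
      case True
      then show ?thesis by simp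
    next
      case False
      then have "U = {{}}" "D = {{}}" using \<open>U \<subseteq> {{}}\<close> \<open>D \<subseteq> {{}}\<close> by auto
      then show ?thesis by simp
    qed
  qed
next
  case (insert x S)
  show ?case
  proof (intro allI impI)
    fix U D :: "'a set set" assume U: "upc (insert x S) U" and D: "dnc (insert x S) D"
    define U0 where "U0 = {Y\<in>Pow S. Y \<in> U}"
    define U1 where "U1 = {Y\<in>Pow S. insert x Y \<in> U}"
    define D0 where "D0 = {Y\<in>Pow S. Y \<in> D}"
    define D1 where "D1 = {Y\<in>Pow S. insert x Y \<in> D}"
    have uU0: "upc S U0" using U unfolding upc_def U0_def by blast
    have uU1: "upc S U1" using U unfolding upc_def U1_def
      by (auto) (meson insert_mono insert_subset subsetD)
    have dD0: "dnc S D0" using D unfolding dnc_def D0_def by blast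
    have dD1: "dnc S D1" using D unfolding dnc_def D1_def
      by auto (meson insert_mono)
    have U01: "U0 \<subseteq> U1" unfolding U0_def U1_def
    proof (intro subsetI)
      fix Y assume "Y \<in> {Y \<in> Pow S. Y \<in> U}"
      then have "Y \<in> U" "Y \<subseteq> S" by auto
      moreover have "insert x Y \<subseteq> insert x S" using \<open>Y \<subseteq> S\<close> by blast
      ultimately have "insert x Y \<in> U" using U unfolding upc_def by (meson subset_insertI)
      then show "Y \<in> {Y \<in> Pow S. insert x Y \<in> U}" using \<open>Y \<subseteq> S\<close> by auto
    qed
    have D10: "D1 \<subseteq> D0" using D unfolding dnc_def D0_def D1_def by auto
    have sU: "U \<subseteq> Pow (insert x S)" using U by (simp add: upc_def)
    have sD: "D \<subseteq> Pow (insert x S)" using D by (simp add: dnc_def)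
    have cU: "card U = card U0 + card U1" unfolding U0_def U1_def
      using split_card[OF insert(1,2) sU] .
    have cD: "card D = card D0 + card D1" unfolding D0_def D1_def
      using split_card[OF insert(1,2) sD] .
    have cI: "card (U \<inter> D) = card (U0 \<inter> D0) + card (U1 \<inter> D1)"
    proof -
      have "card (U \<inter> D) = card {Y\<in>Pow S. Y \<in> U \<inter> D} + card {Y\<in>Pow S. insert x Y \<in> U \<inter> D}"
        using split_card[OF insert(1,2), of "U \<inter> D"] sU by (meson Int_lower1 order_trans)
      moreover have "{Y\<in>Pow S. Y \<in> U \<inter> D} = U0 \<inter> D0" unfolding U0_def D0_def by auto
      moreover have "{Y\<in>Pow S. insert x Y \<in> U \<inter> D} = U1 \<inter> D1" unfolding U1_def D1_def by auto
      ultimately show ?thesis by simp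
    qed
    have h0: "card (U0 \<inter> D0) * 2 ^ card S \<le> card U0 * card D0" using insert(3) uU0 dD0 by blast
    have h1: "card (U1 \<inter> D1) * 2 ^ card S \<le> card U1 * card D1" using insert(3) uU1 dD1 by blast
    have fS: "finite (Pow S)" using insert(1) by simp
    have m0: "card U0 \<le> card U1"
      by (rule card_mono[OF _ U01]) (rule finite_subset[OF _ fS], auto simp: U1_def)
    have m1: "card D1 \<le> card D0"
      by (rule card_mono[OF _ D10]) (rule finite_subset[OF _ fS], auto simp: D0_def)
    have "card (insert x S) = Suc (card S)" using insert(1,2) by simp
    then show "card (U \<inter> D) * 2 ^ card (insert x S) \<le> card U * card D"
      using arith_step[OF h0 h1 m0 m1] cU cD cI by simp
  qed
qed

lemma real_ineq:
  fixes a b x y N :: real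
  assumes "a * N \<le> x * y" "b * N \<le> (N - x) * (N - y)" "b \<le> a"
    "0 \<le> x" "x \<le> N" "0 \<le> y" "y \<le> N" "0 < N" "0 \<le> b"
  shows "a + 3 * b \<le> N"
proof (cases "x + y \<ge> N")
  case True
  have "4 * x * y \<le> (x + y)^2" proof - have "0 \<le> (x - y)^2" by simp then show ?thesis by (simp add: power2_eq_square algebra_simps) qed
  have "(x + y - N) * (x + y - 2 * N) \<le> 0"
    using True assms by (intro mult_nonneg_nonpos) auto
  have "(a + 3 * b) * N \<le> x * y + 3 * ((N - x) * (N - y))" using assms by (simp add: algebra_simps)
  also have "\<dots> \<le> N * N" using \<open>4 * x * y \<le> (x + y)^2\<close> \<open>(x + y - N) * (x + y - 2 * N) \<le> 0\<close>
    by (simp add: algebra_simps power2_eq_square)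
  finally show ?thesis using assms(8) by (metis mult_le_cancel_right_pos)
next
  case False
  have "4 * x * y \<le> (x + y)^2" proof - have "0 \<le> (x - y)^2" by simp then show ?thesis by (simp add: power2_eq_square algebra_simps) qed
  also have "\<dots> \<le> N * N" using False assms by (simp add: power2_eq_square mult_mono)
  finally have "(4 * a) * N \<le> N * N" using assms(1) by linarith
  then have "4 * a \<le> N" using assms(8) by (metis mult_le_cancel_right_pos)
  then show ?thesis using assms(3) by linarith
qed

lemma compl_bound:
  assumes "finite N" "F \<subseteq> Pow N" "G \<subseteq> Pow N" "\<forall>X\<in>F. N - X \<notin> G"
  shows "card F + card G \<le> 2 ^ card N"
proof -
  have inj: "inj_on (\<lambda>X. N - X) G"
    using assms(3) by (auto simp: inj_on_def)
  have sub: "(\<lambda>X. N - X) ` G \<subseteq> Pow N" by auto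
  have disj: "F \<inter> (\<lambda>X. N - X) ` G = {}"
  proof (rule ccontr)
    assume "F \<inter> (\<lambda>X. N - X) ` G \<noteq> {}"
    then obtain Y where "Y \<in> G" "N - Y \<in> F" by auto
    moreover have "N - (N - Y) = Y" using \<open>Y \<in> G\<close> assms(3) by auto
    ultimately show False using assms(4) by metis
  qed
  have fF: "finite F" using assms(1,2) finite_subset by blast
  have fG: "finite G" using assms(1,3) finite_subset by blast
  have "card F + card G = card F + card ((\<lambda>X. N - X) ` G)" using card_image[OF inj] by simp
  also have "\<dots> = card (F \<union> (\<lambda>X. N - X) ` G)"
    using card_Un_disjoint[OF fF _ disj] fG by simp
  also have "\<dots> \<le> card (Pow N)"
    by (rule card_mono) (use assms(1,2) sub in auto)
  also have "\<dots> = 2 ^ card N" using assms(1) by (simp add: card_Pow)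
  finally show ?thesis .
qed

theorem theorem3p3:
  fixes n :: nat and \<A> \<B> :: "nat set set"
  assumes "\<A> \<subseteq> Pow {1..n}" and "\<B> \<subseteq> Pow {1..n}"
    and "cross_IU n \<A> \<B>"
    and "card \<A> \<ge> card \<B>"
  shows "card \<A> + 3 * card \<B> \<le> 2 ^ n"
proof -
  define N where "N = {1..n}"
  have fN: "finite N" and cN: "card N = n" unfolding N_def by auto
  define UA where "UA = {X \<in> Pow N. \<exists>A\<in>\<A>. A \<subseteq> X}"
  define DA where "DA = {X \<in> Pow N. \<exists>A\<in>\<A>. X \<subseteq> A}"
  define UB where "UB = {X \<in> Pow N. \<exists>B\<in>\<B>. B \<subseteq> X}"
  define DB where "DB = {X \<in> Pow N. \<exists>B\<in>\<B>. X \<subseteq> B}"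
  have cr: "\<And>A B. A \<in> \<A> \<Longrightarrow> B \<in> \<B> \<Longrightarrow> A \<inter> B \<noteq> {} \<and> A \<union> B \<noteq> N"
    using assms(3) unfolding cross_IU_def N_def by blast
  have uA: "upc N UA" unfolding upc_def UA_def by auto
  have uB: "upc N UB" unfolding upc_def UB_def by auto
  have dA: "dnc N DA" unfolding dnc_def DA_def by auto
  have dB: "dnc N DB" unfolding dnc_def DB_def by auto
  have fP: "finite (Pow N)" using fN by simp
  have hA: "card \<A> * 2 ^ n \<le> card UA * card DA"
  proof -
    have "\<A> \<subseteq> UA \<inter> DA" using assms(1) unfolding UA_def DA_def N_def by auto
    moreover have "finite (UA \<inter> DA)" using fP unfolding UA_def by auto
    ultimately have "card \<A> \<le> card (UA \<inter> DA)" by (rule card_mono[rotated])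
    then show ?thesis using harris[OF fN, rule_format, OF uA dA] cN by (metis le_trans mult_le_mono1)
  qed
  have hB: "card \<B> * 2 ^ n \<le> card UB * card DB"
  proof -
    have "\<B> \<subseteq> UB \<inter> DB" using assms(2) unfolding UB_def DB_def N_def by auto
    moreover have "finite (UB \<inter> DB)" using fP unfolding UB_def by auto
    ultimately have "card \<B> \<le> card (UB \<inter> DB)" by (rule card_mono[rotated])
    then show ?thesis using harris[OF fN, rule_format, OF uB dB] cN by (metis le_trans mult_le_mono1)
  qed
  have cU: "card UA + card UB \<le> 2 ^ n"
  proof -
    have nc: "\<forall>X\<in>UA. N - X \<notin> UB"
    proof (intro ballI notI)
      fix X assume "X \<in> UA" "N - X \<in> UB"
      then obtain A B where "A \<in> \<A>" "B \<in> \<B>" "A \<subseteq> X" "B \<subseteq> N - X"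
        unfolding UA_def UB_def by auto
      then show False using cr by blast
    qed
    have "card UA + card UB \<le> 2 ^ card N"
      by (rule compl_bound[OF fN _ _ nc]) (auto simp: UA_def UB_def)
    then show ?thesis using cN by simp
  qed
  have cD: "card DA + card DB \<le> 2 ^ n"
  proof -
    have nc: "\<forall>X\<in>DA. N - X \<notin> DB"
    proof (intro ballI notI)
      fix X assume "X \<in> DA" "N - X \<in> DB"
      then obtain A B where "A \<in> \<A>" "B \<in> \<B>" "X \<subseteq> A" "N - X \<subseteq> B"
        unfolding DA_def DB_def by auto
      moreover have "A \<subseteq> N" "B \<subseteq> N" using assms(1,2) \<open>A \<in> \<A>\<close> \<open>B \<in> \<B>\<close> unfolding N_def by auto
      ultimately have "A \<union> B = N" by blast
      then show False using cr \<open>A \<in> \<A>\<close> \<open>B \<in> \<B>\<close> by blast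
    qed
    have "card DA + card DB \<le> 2 ^ card N"
      by (rule compl_bound[OF fN _ _ nc]) (auto simp: DA_def DB_def)
    then show ?thesis using cN by simp
  qed
  define M where "M = (2::nat) ^ n"
  have hB': "card \<B> * M \<le> (M - card UA) * (M - card DA)"
  proof -
    have "card UB \<le> M - card UA" "card DB \<le> M - card DA" using cU cD unfolding M_def by auto
    then have "card UB * card DB \<le> (M - card UA) * (M - card DA)" by (rule mult_le_mono)
    then show ?thesis using hB unfolding M_def by linarith
  qed
  have r: "real (card \<A>) + 3 * real (card \<B>) \<le> real M"
  proof (rule real_ineq[where x = "real (card UA)" and y = "real (card DA)"])
    show "real (card \<A>) * real M \<le> real (card UA) * real (card DA)"
      using hA unfolding M_def by (metis of_nat_le_iff of_nat_mult)
    have "card UA \<le> M" "card DA \<le> M" using cU cD unfolding M_def by auto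
    then show "real (card \<B>) * real M \<le> (real M - real (card UA)) * (real M - real (card DA))"
      using hB' by (metis of_nat_diff of_nat_le_iff of_nat_mult)
    show "real (card UA) \<le> real M" "real (card DA) \<le> real M" using \<open>card UA \<le> M\<close> \<open>card DA \<le> M\<close> by auto
  qed (use assms(4) M_def in auto)
  then show ?thesis unfolding M_def by linarith
qed

end
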